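(* Let $f:X\to Y$ be a continuous map between arbitrary topological spaces. Then $f$ is locally closed if and only if $f^{-1}:\mathcal P Y\to\mathcal P X$ is a D-morphism of MT-algebras.
   Context: For a space $X$, $\mathcal P X$ is the MT-algebra consisting of the powerset of $X$ with $\square$ the topological interior operator. An MT-morphism between MT-algebras is a complete boolean homomorphism $h$ with $h(\square a)\le\square h(a)$ for all $a$; such $h:M\to N$ has a left adjoint $h^*:N\to M$, $h^*(b)=\bigwedge\{a\in M: b\le h(a)\}$. An element $a$ of an MT-algebra is locally closed if $a=\square b\wedge\Diamond c$ for some $b,c$, where $\Diamond=\neg\square\neg$. An MT-morphism $h$ is a D-morphism if $h^*$ maps locally closed atoms to locally closed atoms. A point $x\in X$ is locally closed if $\{x\}$ is closed in some open neighborhood of $x$; a continuous map is locally closed if it maps locally closed points to locally closed points. *)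

theory Defs
  imports "HOL-Analysis.Analysis"
begin

text \<open>The MT-algebra P X: subsets of topspace X, box = interior, diamond = closure.
  Elements of P X are represented as sets A with A \<subseteq> topspace X.\<close>

definition pow_atom :: "'a topology \<Rightarrow> 'a set \<Rightarrow> bool" where
  "pow_atom X a \<longleftrightarrow> a \<subseteq> topspace X \<and> a \<noteq> {} \<and> (\<forall>b. b \<subseteq> a \<longrightarrow> b = {} \<or> b = a)"

definition pow_locally_closed :: "'a topology \<Rightarrow> 'a set \<Rightarrow> bool" where
  "pow_locally_closed X a \<longleftrightarrow>
     (\<exists>b c. b \<subseteq> topspace X \<and> c \<subseteq> topspace X \<and> a = (X interior_of b) \<inter> (X closure_of c))"

definition pow_mt_morphism :: "'b topology \<Rightarrow> 'a topology \<Rightarrow> ('b set \<Rightarrow> 'a set) \<Rightarrow> bool" where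
  "pow_mt_morphism Y X h \<longleftrightarrow>
     (\<forall>B. B \<subseteq> topspace Y \<longrightarrow> h B \<subseteq> topspace X) \<and>
     (\<forall>\<A>. \<A> \<subseteq> Pow (topspace Y) \<longrightarrow> h (\<Union>\<A>) = \<Union>(h ` \<A>)) \<and>
     (\<forall>\<A>. \<A> \<subseteq> Pow (topspace Y) \<longrightarrow> h (topspace Y \<inter> \<Inter>\<A>) = topspace X \<inter> \<Inter>(h ` \<A>)) \<and>
     (\<forall>B. B \<subseteq> topspace Y \<longrightarrow> h (topspace Y - B) = topspace X - h B) \<and>
     (\<forall>B. B \<subseteq> topspace Y \<longrightarrow> h (Y interior_of B) \<subseteq> X interior_of (h B))"

definition pow_left_adjoint :: "'b topology \<Rightarrow> ('b set \<Rightarrow> 'a set) \<Rightarrow> 'a set \<Rightarrow> 'b set" where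
  "pow_left_adjoint Y h A = topspace Y \<inter> \<Inter>{B. B \<subseteq> topspace Y \<and> A \<subseteq> h B}"

definition pow_D_morphism :: "'b topology \<Rightarrow> 'a topology \<Rightarrow> ('b set \<Rightarrow> 'a set) \<Rightarrow> bool" where
  "pow_D_morphism Y X h \<longleftrightarrow> pow_mt_morphism Y X h \<and>
     (\<forall>a. pow_atom X a \<and> pow_locally_closed X a \<longrightarrow>
          pow_atom Y (pow_left_adjoint Y h a) \<and> pow_locally_closed Y (pow_left_adjoint Y h a))"

definition locally_closed_point :: "'a topology \<Rightarrow> 'a \<Rightarrow> bool" where
  "locally_closed_point X x \<longleftrightarrow> x \<in> topspace X \<and>
     (\<exists>U. openin X U \<and> x \<in> U \<and> closedin (subtopology X U) {x})"

definition locally_closed_map :: "'a topology \<Rightarrow> 'b topology \<Rightarrow> ('a \<Rightarrow> 'b) \<Rightarrow> bool" where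
  "locally_closed_map X Y f \<longleftrightarrow>
     (\<forall>x. locally_closed_point X x \<longrightarrow> locally_closed_point Y (f x))"

definition pow_preimage :: "'a topology \<Rightarrow> ('a \<Rightarrow> 'b) \<Rightarrow> 'b set \<Rightarrow> 'a set" where
  "pow_preimage X f B = {x \<in> topspace X. f x \<in> B}"

end

theory Submission
  imports Defs
begin

lemma atom_iff: "pow_atom X a \<longleftrightarrow> (\<exists>x\<in>topspace X. a = {x})"
proof
  assume a: "pow_atom X a"
  then obtain x where x: "x \<in> a" unfolding pow_atom_def by blast
  then have "{x} = a" using a unfolding pow_atom_def by blast
  then show "\<exists>x\<in>topspace X. a = {x}" using a x unfolding pow_atom_def by blast
next
  assume "\<exists>x\<in>topspace X. a = {x}"
  then show "pow_atom X a" unfolding pow_atom_def by blast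
qed

lemma lc_single:
  assumes "x \<in> topspace X"
  shows "pow_locally_closed X {x} \<longleftrightarrow> locally_closed_point X x"
proof
  assume "pow_locally_closed X {x}"
  then obtain b c where bc: "{x} = (X interior_of b) \<inter> (X closure_of c)"
    unfolding pow_locally_closed_def by blast
  have "closedin (subtopology X (X interior_of b)) {x}"
    unfolding closedin_subtopology using bc by (intro exI[of _ "X closure_of c"]) auto
  then show "locally_closed_point X x" unfolding locally_closed_point_def
    using assms bc by (intro conjI exI[of _ "X interior_of b"]) auto
next
  assume "locally_closed_point X x"
  then obtain U where U: "openin X U" "x \<in> U" "closedin (subtopology X U) {x}"
    unfolding locally_closed_point_def by blast
  then obtain T where T: "closedin X T" "{x} = T \<inter> U"
    unfolding closedin_subtopology by blast
  have "{x} = (X interior_of U) \<inter> (X closure_of T)"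
    using T U by (simp add: interior_of_openin closure_of_closedin Int_commute)
  moreover have "U \<subseteq> topspace X" "T \<subseteq> topspace X"
    using closedin_subset[OF T(1)] openin_subset[OF U(1)] by auto
  ultimately show "pow_locally_closed X {x}" unfolding pow_locally_closed_def
    by blast
qed

lemma adj_single:
  assumes "continuous_map X Y f" "x \<in> topspace X"
  shows "pow_left_adjoint Y (pow_preimage X f) {x} = {f x}"
proof -
  have fx: "f x \<in> topspace Y" using continuous_map_image_subset_topspace[OF assms(1)] assms(2) by blast
  have x: "x \<in> topspace X" by (rule assms(2))
  have "{B. B \<subseteq> topspace Y \<and> {x} \<subseteq> pow_preimage X f B} = {B. B \<subseteq> topspace Y \<and> f x \<in> B}"
    unfolding pow_preimage_def using x by blast
  moreover have "topspace Y \<inter> \<Inter>{B. B \<subseteq> topspace Y \<and> f x \<in> B} = {f x}"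
  proof
    show "topspace Y \<inter> \<Inter>{B. B \<subseteq> topspace Y \<and> f x \<in> B} \<subseteq> {f x}"
    proof
      fix y assume "y \<in> topspace Y \<inter> \<Inter>{B. B \<subseteq> topspace Y \<and> f x \<in> B}"
      moreover have "{f x} \<in> {B. B \<subseteq> topspace Y \<and> f x \<in> B}" using fx by blast
      ultimately show "y \<in> {f x}" by blast
    qed
    show "{f x} \<subseteq> topspace Y \<inter> \<Inter>{B. B \<subseteq> topspace Y \<and> f x \<in> B}"
      using fx by blast
  qed
  ultimately show ?thesis unfolding pow_left_adjoint_def by simp
qed

lemma mt:
  assumes "continuous_map X Y f"
  shows "pow_mt_morphism Y X (pow_preimage X f)"
  unfolding pow_mt_morphism_def
proof (intro conjI allI impI)
  fix B assume "B \<subseteq> topspace Y"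
  have "openin X (pow_preimage X f (Y interior_of B))"
    unfolding pow_preimage_def
    using openin_continuous_map_preimage[OF assms openin_interior_of] by simp
  moreover have "pow_preimage X f (Y interior_of B) \<subseteq> pow_preimage X f B"
    unfolding pow_preimage_def using interior_of_subset[of Y B] by blast
  ultimately show "pow_preimage X f (Y interior_of B) \<subseteq> X interior_of pow_preimage X f B"
    by (simp add: interior_of_maximal)
next
  fix B :: "'b set" assume "B \<subseteq> topspace Y"
  show "pow_preimage X f B \<subseteq> topspace X" unfolding pow_preimage_def by blast
next
  fix A :: "'b set set" assume "A \<subseteq> Pow (topspace Y)"
  show "pow_preimage X f (\<Union>A) = \<Union>(pow_preimage X f ` A)" unfolding pow_preimage_def by blast
next
  fix A :: "'b set set" assume "A \<subseteq> Pow (topspace Y)"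
  have fx: "\<And>x. x \<in> topspace X \<Longrightarrow> f x \<in> topspace Y"
    using continuous_map_image_subset_topspace[OF assms] by blast
  show "pow_preimage X f (topspace Y \<inter> \<Inter>A) = topspace X \<inter> \<Inter>(pow_preimage X f ` A)"
  proof (rule set_eqI)
    fix x
    show "x \<in> pow_preimage X f (topspace Y \<inter> \<Inter>A) \<longleftrightarrow> x \<in> topspace X \<inter> \<Inter>(pow_preimage X f ` A)"
      unfolding pow_preimage_def using fx[of x] by auto
  qed
next
  fix B :: "'b set" assume "B \<subseteq> topspace Y"
  have fx: "\<And>x. x \<in> topspace X \<Longrightarrow> f x \<in> topspace Y"
    using continuous_map_image_subset_topspace[OF assms] by blast
  show "pow_preimage X f (topspace Y - B) = topspace X - pow_preimage X f B"
    unfolding pow_preimage_def using fx by blast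
qed

theorem lemma5p12:
  fixes X :: "'a topology" and Y :: "'b topology" and f :: "'a \<Rightarrow> 'b"
  assumes "continuous_map X Y f"
  shows "locally_closed_map X Y f \<longleftrightarrow> pow_D_morphism Y X (pow_preimage X f)"
proof -
  have fx: "\<And>x. x \<in> topspace X \<Longrightarrow> f x \<in> topspace Y"
    using continuous_map_image_subset_topspace[OF assms] by blast
  have lp: "\<And>x. locally_closed_point X x \<Longrightarrow> x \<in> topspace X"
    unfolding locally_closed_point_def by blast
  show ?thesis
  proof
    assume L: "locally_closed_map X Y f"
    show "pow_D_morphism Y X (pow_preimage X f)"
      unfolding pow_D_morphism_def
    proof (intro conjI allI impI)
      fix a assume a: "pow_atom X a \<and> pow_locally_closed X a"
      then obtain x where x: "x \<in> topspace X" "a = {x}" unfolding atom_iff by (elim conjE bexE) 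
      then have "locally_closed_point X x" using a lc_single[OF x(1)] by simp
      then have "locally_closed_point Y (f x)" using L unfolding locally_closed_map_def by blast
      then have "pow_locally_closed Y {f x}" using lc_single[OF fx[OF x(1)]] by simp
      moreover have eq: "pow_left_adjoint Y (pow_preimage X f) a = {f x}"
        using x adj_single[OF assms x(1)] by simp
      ultimately show "pow_locally_closed Y (pow_left_adjoint Y (pow_preimage X f) a)"
        by simp
      show "pow_atom Y (pow_left_adjoint Y (pow_preimage X f) a)"
        unfolding eq atom_iff using fx[OF x(1)] by blast
    qed (rule mt[OF assms])
  next
    assume D: "pow_D_morphism Y X (pow_preimage X f)"
    show "locally_closed_map X Y f" unfolding locally_closed_map_def
    proof (intro allI impI)
      fix x assume x: "locally_closed_point X x"
      then have t: "x \<in> topspace X" by (rule lp)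
      have "pow_atom X {x}" unfolding atom_iff using t by blast
      moreover have "pow_locally_closed X {x}" using lc_single[OF t] x by simp
      ultimately have "pow_locally_closed Y (pow_left_adjoint Y (pow_preimage X f) {x})"
        using conjunct2[OF D[unfolded pow_D_morphism_def], rule_format, of "{x}"] by simp
      then have "pow_locally_closed Y {f x}" using adj_single[OF assms t] by simp
      then show "locally_closed_point Y (f x)" using lc_single[OF fx[OF t]] by simp
    qed
  qed
qed

end
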